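(* Let $0<\mu<L$, $\kappa=L/\mu$, and let $m(z)=z^n+\sum_{i=0}^{n-1}m_iz^i\in\mathbb{R}[z]$ be monic of degree $n\ge1$ with all roots on the unit circle. Let $d(z)\in\mathbb{R}[z]$ with $\deg d<n$, and let $\rho\in(0,1)$ be such that for every $\lambda\in[\mu,L]$, all roots of $p_\lambda(z)=m(z)-\lambda d(z)$ lie in the closed disk $\{z:|z|\le\rho\}$. Then $$\rho\ \ge\ \rho_{\mathrm{TV}}:=\Bigl(\frac{\kappa-1}{\kappa+1}\Bigr)^{1/n}.$$ Equivalently, the worst-case convergence rate (over all symmetric $A$ with eigenvalues in $[\mu,L]$ and all $b$ with model $m$) of any minimal-order optimization filter $C(z)=\frac{d(z)}{m(z)}I_d$ that asymptotically tracks the minimizer is at least $\rho_{\mathrm{TV}}$.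
   Context: Setting: objective $f_k(x)=\tfrac12x^\top Ax+b_k^\top x$, iterates with $\mathcal{Z}$-transform $X(z)=C(z)(AX(z)+B(z))$, where $B(z)=B_N(z)/m(z)$ is the $\mathcal{Z}$-transform of $\{b_k\}$; convergence rate is $\limsup_k\|x_k-x_k^\star\|^{1/k}$ with $x_k^\star=-A^{-1}b_k$. For the filter $C(z)=\frac{d(z)}{m(z)}I_d$, the closed-loop poles are the roots of $m(z)-\lambda d(z)$ for $\lambda$ ranging over the eigenvalues of $A$. *)

theory Defs
  imports "HOL-Analysis.Analysis" "HOL-Computational_Algebra.Polynomial"
begin

definition croots :: "real poly \<Rightarrow> complex set" where
  "croots p = {z. poly (map_poly complex_of_real p) z = 0}"

end

theory Submission
  imports Defs "HOL-Computational_Algebra.Fundamental_Theorem_Algebra"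
begin

lemma const_coeff_roots:
  fixes p :: "real poly"
  assumes "lead_coeff p = 1"
  obtains root where "\<bar>coeff p 0\<bar> = (\<Prod>i<degree p. cmod (root i))"
    "\<And>i. i < degree p \<Longrightarrow> root i \<in> croots p"
proof -
  define P where "P = map_poly complex_of_real p"
  have lc: "lead_coeff P = 1" and dg: "degree P = degree p"
    using assms by (simp_all add: P_def degree_map_poly coeff_map_poly)
  obtain root where r: "smult (lead_coeff P) (\<Prod>i<degree P. [:-root i, 1:]) = P"
    using complex_poly_decompose' by blast
  hence eq: "P = (\<Prod>i<degree p. [:-root i, 1:])" using lc dg by simp
  have h1: "poly P 0 = (\<Prod>i<degree p. - root i)"
    by (subst eq) (simp add: poly_prod)
  have h2: "poly P 0 = complex_of_real (coeff p 0)"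
    by (simp add: P_def poly_0_coeff_0 coeff_map_poly)
  have "\<bar>coeff p 0\<bar> = cmod (poly P 0)" using h2 by simp
  also have "\<dots> = cmod (\<Prod>i<degree p. - root i)" using h1 by simp
  also have "\<dots> = (\<Prod>i<degree p. cmod (root i))" by (simp only: prod_norm[symmetric] norm_minus_cancel)
  finally have "\<bar>coeff p 0\<bar> = (\<Prod>i<degree p. cmod (root i))" .
  moreover have "root i \<in> croots p" if "i < degree p" for i
  proof -
    have "poly P (root i) = (\<Prod>j<degree p. poly [:-root j, 1:] (root i))"
      by (subst eq) (simp add: poly_prod)
    also have "\<dots> = 0" using that by (intro prod_zero) auto
    finally show ?thesis by (simp add: croots_def P_def)
  qed
  ultimately show ?thesis using that by blast
qed

lemma const_coeff_le:
  fixes p :: "real poly"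
  assumes "lead_coeff p = 1" "\<forall>z \<in> croots p. cmod z \<le> r"
  shows "\<bar>coeff p 0\<bar> \<le> r ^ degree p"
proof -
  obtain root where a: "\<bar>coeff p 0\<bar> = (\<Prod>i<degree p. cmod (root i))"
    and b: "\<And>i. i < degree p \<Longrightarrow> root i \<in> croots p"
    using const_coeff_roots[OF assms(1)] by blast
  have "(\<Prod>i<degree p. cmod (root i)) \<le> (\<Prod>i<degree p. r)"
    by (intro prod_mono) (use b assms(2) in auto)
  thus ?thesis using a by simp
qed

lemma const_coeff_eq1:
  fixes p :: "real poly"
  assumes "lead_coeff p = 1" "\<forall>z \<in> croots p. cmod z = 1"
  shows "\<bar>coeff p 0\<bar> = 1"
proof -
  obtain root where a: "\<bar>coeff p 0\<bar> = (\<Prod>i<degree p. cmod (root i))"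
    and b: "\<And>i. i < degree p \<Longrightarrow> root i \<in> croots p"
    using const_coeff_roots[OF assms(1)] by blast
  have "(\<Prod>i<degree p. cmod (root i)) = (\<Prod>i<degree p. 1)"
    by (intro prod.cong) (use b assms(2) in auto)
  thus ?thesis using a by simp
qed

theorem theorem1:
  fixes \<mu> L \<rho> :: real and m d :: "real poly"
  assumes "0 < \<mu>" "\<mu> < L"
    and "lead_coeff m = 1" and "degree m \<ge> 1"
    and "\<forall>z \<in> croots m. cmod z = 1"
    and "degree d < degree m"
    and "0 < \<rho>" "\<rho> < 1"
    and "\<forall>lam \<in> {\<mu>..L}. \<forall>z \<in> croots (m - smult lam d). cmod z \<le> \<rho>"
  shows "\<rho> \<ge> ((L / \<mu> - 1) / (L / \<mu> + 1)) powr (1 / real (degree m))"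
proof -
  define n where "n = degree m"
  have pl: "lead_coeff (m - smult lam d) = 1 \<and> degree (m - smult lam d) = n" for lam
  proof -
    have lt: "degree (smult lam d) < degree m" using assms(6) by (meson degree_smult_le le_less_trans)
    have dg: "degree (m - smult lam d) = degree m"
      using degree_add_eq_left[of "- smult lam d" m] lt by simp
    have "coeff d (degree m) = 0" using assms(6) by (simp add: coeff_eq_0)
    thus ?thesis using assms(3) dg by (simp add: n_def)
  qed
  have bnd: "\<bar>coeff m 0 - lam * coeff d 0\<bar> \<le> \<rho> ^ n" if "lam \<in> {\<mu>..L}" for lam
  proof -
    have "\<bar>coeff (m - smult lam d) 0\<bar> \<le> \<rho> ^ degree (m - smult lam d)"
      using const_coeff_le[of "m - smult lam d" \<rho>] pl[of lam] assms(9) that by blast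
    thus ?thesis using pl[of lam] by simp
  qed
  have m0: "\<bar>coeff m 0\<bar> = 1" using const_coeff_eq1 assms(3,5) by blast
  have b1: "\<bar>coeff m 0 - \<mu> * coeff d 0\<bar> \<le> \<rho> ^ n" using bnd assms(1,2) by simp
  have b2: "\<bar>coeff m 0 - L * coeff d 0\<bar> \<le> \<rho> ^ n" using bnd assms(1,2) by simp
  have rn: "\<rho> ^ n < 1" using assms(7,8) n_def assms(4) by (simp add: power_less_one_iff)
  define c where "c = \<bar>coeff d 0\<bar>"
  have c1: "1 - \<mu> * c \<le> \<rho> ^ n" and c2: "L * c - 1 \<le> \<rho> ^ n"
  proof -
    have "1 - \<mu> * c \<le> \<rho> ^ n \<and> L * c - 1 \<le> \<rho> ^ n"
    proof (cases "coeff d 0 \<ge> 0")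
      case True
      hence cd: "c = coeff d 0" unfolding c_def by simp
      have p1: "\<mu> * coeff d 0 \<ge> 0" "L * coeff d 0 \<ge> 0" using True assms(1,2) by simp_all
      show ?thesis
      proof (cases "coeff m 0 \<ge> 0")
        case True
        hence "coeff m 0 = 1" using m0 by simp
        thus ?thesis using b1 b2 cd p1 unfolding abs_le_iff cd by (intro conjI; linarith)
      next
        case False
        hence "coeff m 0 = -1" using m0 by simp
        thus ?thesis using b1 b2 cd p1 rn unfolding abs_le_iff cd by (intro conjI; linarith)
      qed
    next
      case False
      hence cd: "c = - coeff d 0" unfolding c_def by simp
      have p1: "\<mu> * coeff d 0 \<le> 0" "L * coeff d 0 \<le> 0" using False assms(1,2)
        by (simp_all add: mult_nonneg_nonpos)
      show ?thesis
      proof (cases "coeff m 0 \<ge> 0")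
        case True
        hence "coeff m 0 = 1" using m0 by simp
        thus ?thesis using b1 b2 cd p1 rn unfolding abs_le_iff cd by (intro conjI; linarith)
      next
        case False
        hence "coeff m 0 = -1" using m0 by simp
        thus ?thesis using b1 b2 cd p1 unfolding abs_le_iff cd by (intro conjI; linarith)
      qed
    qed
    thus "1 - \<mu> * c \<le> \<rho> ^ n" "L * c - 1 \<le> \<rho> ^ n" by auto
  qed
  define x where "x = (L / \<mu> - 1) / (L / \<mu> + 1)"
  have x_eq: "x = (L - \<mu>) / (L + \<mu>)"
  proof -
    have "x = ((L - \<mu>) / \<mu>) / ((L + \<mu>) / \<mu>)" using assms(1) unfolding x_def
      by (simp add: diff_divide_distrib add_divide_distrib)
    thus ?thesis using assms(1) by simp
  qed
  have "(L - \<mu>) \<le> \<rho> ^ n * (L + \<mu>)"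
  proof -
    have "L * (1 - \<rho> ^ n) \<le> L * (\<mu> * c)" using c1 assms(1,2) by (intro mult_left_mono) auto
    moreover have "\<mu> * (L * c) \<le> \<mu> * (1 + \<rho> ^ n)" using c2 assms(1) by (intro mult_left_mono) auto
    ultimately show ?thesis by (simp add: algebra_simps)
  qed
  hence xle: "x \<le> \<rho> ^ n" using assms(1,2) x_eq by (simp add: divide_le_eq)
  have x0: "x \<ge> 0" using x_eq assms(1,2) by simp
  have "x powr (1 / real n) \<le> (\<rho> ^ n) powr (1 / real n)"
    using xle x0 by (intro powr_mono2) auto
  also have "\<dots> = \<rho>"
  proof -
    have n0: "real n > 0" using assms(4) n_def by simp
    have "\<rho> ^ n = \<rho> powr (real n)" using assms(7) by (simp add: powr_realpow)
    hence "(\<rho> ^ n) powr (1 / real n) = \<rho> powr (real n * (1 / real n))" by (simp add: powr_powr)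
    also have "\<dots> = \<rho>" using n0 assms(7) by simp
    finally show ?thesis .
  qed
  finally show ?thesis unfolding x_def n_def .
qed

end
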